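(* Let $A$ take values $a_1,\ldots,a_{N_A}$ and $B$ take values $b_1,\ldots,b_{N_B}$. Let $P_K$ be a non-product joint probability distribution on $(A,B)$ obeying the Kolmogorov axioms of probability (so $P_K(a_i,b_j)\ge 0$, $\sum_{i,j}P_K(a_i,b_j)=1$), with all marginals nonzero and with conditional matrix $\mathbf{P}_K(A|B)$ (entries $P_K(a_i,b_j)/P_K(b_j)$) invertible. Then there exists a generalized two-variable probability assignment $P_I$ (as defined in the context) satisfying Axiom 5 such that $P_K(a_i,b_j)=P_I(a_i,b_j)$ for all $i$ and $j$.
   Context: Generalized two-variable probability assignment: a pair of real-valued (not necessarily nonnegative) arrays $P(a_i,b_j)$ (probability relative to the ordering in which $B$ precedes $A$) and $P(b_j,a_i)$ (relative to the ordering in which $A$ precedes $B$) with $\sum_{i,j}P(a_i,b_j)=1=\sum_{i,j}P(b_j,a_i)$ and ordering-independent marginals: $P(a_i)=\sum_j P(a_i,b_j)=\sum_j P(b_j,a_i)$, $P(b_j)=\sum_i P(a_i,b_j)=\sum_i P(b_j,a_i)$. Conditionals: $P(a_i|b_j)=P(a_i,b_j)/P(b_j)$, $P(b_j|a_i)=P(b_j,a_i)/P(a_i)$; $\mathbf{P}(A|B)$ is the $N_A\times N_B$ matrix of $P(a_i|b_j)$ and $\mathbf{P}(B|A)$ the $N_B\times N_A$ matrix of $P(b_j|a_i)$; $\vec P(A),\vec P(B)$ are the marginal vectors. Axiom 5 (inference axiom): $\mathbf{P}(A|B)$ and $\mathbf{P}(B|A)$ may be specified independently of $\vec P(B)$ and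 $\vec P(A)$, i.e. the same conditional matrices are consistent with $\vec P(A)=\mathbf{P}(A|B)\vec P(B)$ and $\vec P(B)=\mathbf{P}(B|A)\vec P(A)$ for every choice of the marginals. A distribution is a product distribution if $P(a_i,b_j)=P(a_i)P(b_j)$ for all $i,j$; otherwise non-product. *)

theory Defs
  imports "HOL-Analysis.Analysis"
begin

text \<open>Values of A are indexed by a finite type 'a (N_A = CARD('a)),
values of B by a finite type 'b (N_B = CARD('b)).
A joint array P(a_i,b_j) is a function 'a => 'b => real;
the array P(b_j,a_i) (other ordering) is a function 'b => 'a => real.\<close>

definition margA :: "('a::finite \<Rightarrow> 'b::finite \<Rightarrow> real) \<Rightarrow> 'a \<Rightarrow> real" where
  "margA P i = (\<Sum>j\<in>UNIV. P i j)"

definition margB :: "('a::finite \<Rightarrow> 'b::finite \<Rightarrow> real) \<Rightarrow> 'b \<Rightarrow> real" where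
  "margB P j = (\<Sum>i\<in>UNIV. P i j)"

definition gen_assignment ::
  "('a::finite \<Rightarrow> 'b::finite \<Rightarrow> real) \<Rightarrow> ('b \<Rightarrow> 'a \<Rightarrow> real) \<Rightarrow> bool" where
  "gen_assignment PAB PBA \<longleftrightarrow>
     (\<Sum>i\<in>UNIV. \<Sum>j\<in>UNIV. PAB i j) = 1 \<and>
     (\<Sum>i\<in>UNIV. \<Sum>j\<in>UNIV. PBA j i) = 1 \<and>
     (\<forall>i. (\<Sum>j\<in>UNIV. PAB i j) = (\<Sum>j\<in>UNIV. PBA j i)) \<and>
     (\<forall>j. (\<Sum>i\<in>UNIV. PAB i j) = (\<Sum>i\<in>UNIV. PBA j i))"

definition condAB :: "('a::finite \<Rightarrow> 'b::finite \<Rightarrow> real) \<Rightarrow> real^'b^'a" where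
  "condAB PAB = (\<chi> i j. PAB i j / margB PAB j)"

definition condBA :: "('b::finite \<Rightarrow> 'a::finite \<Rightarrow> real) \<Rightarrow> real^'a^'b" where
  "condBA PBA = (\<chi> j i. PBA j i / (\<Sum>j'\<in>UNIV. PBA j' i))"

text \<open>Axiom 5: the same conditional matrices are consistent with
P(A) = P(A|B) P(B) and P(B) = P(B|A) P(A) for every choice of the marginals
(every real vector summing to 1).\<close>
definition axiom5 ::
  "('a::finite \<Rightarrow> 'b::finite \<Rightarrow> real) \<Rightarrow> ('b \<Rightarrow> 'a \<Rightarrow> real) \<Rightarrow> bool" where
  "axiom5 PAB PBA \<longleftrightarrow>
     (\<forall>pB :: real^'b. (\<Sum>j\<in>UNIV. pB $ j) = 1 \<longrightarrow>
         condBA PBA *v (condAB PAB *v pB) = pB) \<and>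
     (\<forall>pA :: real^'a. (\<Sum>i\<in>UNIV. pA $ i) = 1 \<longrightarrow>
         condAB PAB *v (condBA PBA *v pA) = pA)"

definition kolmogorov :: "('a::finite \<Rightarrow> 'b::finite \<Rightarrow> real) \<Rightarrow> bool" where
  "kolmogorov P \<longleftrightarrow> (\<forall>i j. P i j \<ge> 0) \<and> (\<Sum>i\<in>UNIV. \<Sum>j\<in>UNIV. P i j) = 1"

definition product_dist :: "('a::finite \<Rightarrow> 'b::finite \<Rightarrow> real) \<Rightarrow> bool" where
  "product_dist P \<longleftrightarrow> (\<forall>i j. P i j = margA P i * margB P j)"

end

theory Submission
  imports Defs
begin

theorem corollary1:
  fixes PK :: "'a::finite \<Rightarrow> 'b::finite \<Rightarrow> real"
  assumes "kolmogorov PK"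
    and "\<not> product_dist PK"
    and "\<forall>i. margA PK i \<noteq> 0"
    and "\<forall>j. margB PK j \<noteq> 0"
    and "invertible (condAB PK)"
  shows "\<exists>(PIab :: 'a \<Rightarrow> 'b \<Rightarrow> real) (PIba :: 'b \<Rightarrow> 'a \<Rightarrow> real).
           gen_assignment PIab PIba \<and> axiom5 PIab PIba \<and> (\<forall>i j. PK i j = PIab i j)"
proof -
  define M where "M = condAB PK"
  define N where "N = matrix_inv M"
  define pA where "pA = margA PK"
  define pB where "pB = margB PK"
  have MN: "M ** N = mat 1" and NM: "N ** M = mat 1"
  proof -
    have "\<exists>A'. M ** A' = mat 1 \<and> A' ** M = mat 1" using assms(5) unfolding M_def invertible_def .
    then have "M ** N = mat 1 \<and> N ** M = mat 1" unfolding N_def matrix_inv_def by (rule someI_ex)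
    then show "M ** N = mat 1" "N ** M = mat 1" by auto
  qed
  have Mij: "M $ i $ j = PK i j / pB j" for i j unfolding M_def condAB_def pB_def by simp
  have colM: "(\<Sum>i\<in>UNIV. M $ i $ j) = 1" for j
    using assms(4) unfolding Mij sum_divide_distrib[symmetric] pB_def margB_def by simp
  have colN: "(\<Sum>j\<in>UNIV. N $ j $ i) = 1" for i
  proof -
    have "(\<Sum>j\<in>UNIV. N $ j $ i) = (\<Sum>j\<in>UNIV. (\<Sum>l\<in>UNIV. M $ l $ j) * N $ j $ i)"
      by (simp add: colM)
    also have "\<dots> = (\<Sum>j\<in>UNIV. \<Sum>l\<in>UNIV. M $ l $ j * N $ j $ i)"
      by (simp add: sum_distrib_right)
    also have "\<dots> = (\<Sum>l\<in>UNIV. \<Sum>j\<in>UNIV. M $ l $ j * N $ j $ i)"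
      by (rule sum.swap)
    also have "\<dots> = (\<Sum>l\<in>UNIV. (M ** N) $ l $ i)" by (simp add: matrix_matrix_mult_def)
    also have "\<dots> = 1" by (simp add: MN mat_def)
    finally show ?thesis .
  qed
  have MpB: "M *v (\<chi> j. pB j) = (\<chi> i. pA i)"
    using assms(4) by (simp add: vec_eq_iff matrix_vector_mult_def Mij pA_def margA_def pB_def)
  have NpA: "N *v (\<chi> i. pA i) = (\<chi> j. pB j)"
    by (simp add: MpB[symmetric] matrix_vector_mul_assoc NM)
  define PBA where "PBA = (\<lambda>j i. N $ j $ i * pA i)"
  have csum: "(\<Sum>j\<in>UNIV. PBA j i) = pA i" for i
    unfolding PBA_def sum_distrib_right[symmetric] colN by simp
  have rsum: "(\<Sum>i\<in>UNIV. PBA j i) = pB j" for j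
  proof -
    have "(\<Sum>i\<in>UNIV. PBA j i) = (N *v (\<chi> i. pA i)) $ j"
      by (simp add: PBA_def matrix_vector_mult_def)
    then show ?thesis by (simp add: NpA)
  qed
  have cBA: "condBA PBA = N"
  proof -
    have "condBA PBA $ j $ i = N $ j $ i" for j i
    proof -
      have "condBA PBA $ j $ i = PBA j i / pA i" unfolding condBA_def csum by simp
      also have "\<dots> = N $ j $ i" using assms(3) by (simp add: PBA_def pA_def)
      finally show ?thesis .
    qed
    then show ?thesis by (simp add: vec_eq_iff)
  qed
  have tot: "(\<Sum>i\<in>UNIV. \<Sum>j\<in>UNIV. PK i j) = 1" using assms(1) by (simp add: kolmogorov_def)
  have g: "gen_assignment PK PBA"
    unfolding gen_assignment_def
  proof (intro conjI allI)
    show "(\<Sum>i\<in>UNIV. \<Sum>j\<in>UNIV. PK i j) = 1" by (rule tot)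
    show "(\<Sum>i\<in>UNIV. \<Sum>j\<in>UNIV. PBA j i) = 1" using tot by (simp add: csum pA_def margA_def)
    show "(\<Sum>j\<in>UNIV. PK i j) = (\<Sum>j\<in>UNIV. PBA j i)" for i by (simp add: csum pA_def margA_def)
    show "(\<Sum>i\<in>UNIV. PK i j) = (\<Sum>i\<in>UNIV. PBA j i)" for j by (simp add: rsum pB_def margB_def)
  qed
  have a: "axiom5 PK PBA"
    unfolding axiom5_def cBA M_def[symmetric]
    by (simp add: matrix_vector_mul_assoc NM MN)
  show ?thesis using g a by blast
qed

end
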